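(* Let $P=(p_1,\dots,p_n)$ be points in $\mathbb{R}^d$, $\mathcal{F}$ a constraint for $k$-CMedian, and $\mathcal{C}=\{c_1,\dots,c_k\}\subset\mathbb{R}^d$ with $\omega=\frac1n\sum_{i=1}^n\min_{c\in\mathcal{C}}\|p_i-c\|$. For each $i$ let $\tilde p_i$ be a point of $\mathcal{C}$ nearest to $p_i$, and $\tilde P=(\tilde p_1,\dots,\tilde p_n)$. If $\mu_{opt}$ and $\tilde\mu_{opt}$ denote the optimal $k$-CMedian values of $P$ and $\tilde P$ (same $\mathcal{F}$), then $\tilde\mu_{opt}\le\omega+\mu_{opt}$.
   Context: A constraint for $k$-CMedian is a nonempty family $\mathcal{F}$ of ordered partitions $(S_1,\dots,S_k)$ of $\{1,\dots,n\}$ into $k$ parts. For a sequence $X=(x_1,\dots,x_n)$ its optimal $k$-CMedian value is $\min_{(S_j)\in\mathcal{F}}\min_{c'_1,\dots,c'_k\in\mathbb{R}^d}\frac1n\sum_j\sum_{i\in S_j}\|x_i-c'_j\|$. *)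

theory Defs
  imports "HOL-Analysis.Analysis"
begin

definition ordered_partition :: "nat \<Rightarrow> nat \<Rightarrow> (nat \<Rightarrow> nat set) \<Rightarrow> bool" where
  "ordered_partition n k S \<longleftrightarrow>
     (\<Union>j\<in>{1..k}. S j) = {1..n} \<and>
     (\<forall>j\<in>{1..k}. \<forall>j'\<in>{1..k}. j \<noteq> j' \<longrightarrow> S j \<inter> S j' = {})"

definition is_constraint :: "nat \<Rightarrow> nat \<Rightarrow> (nat \<Rightarrow> nat set) set \<Rightarrow> bool" where
  "is_constraint n k F \<longleftrightarrow> F \<noteq> {} \<and> (\<forall>S\<in>F. ordered_partition n k S)"

definition cmedian_cost :: "nat \<Rightarrow> nat \<Rightarrow> (nat \<Rightarrow> 'a::euclidean_space) \<Rightarrow> (nat \<Rightarrow> nat set) \<Rightarrow> (nat \<Rightarrow> 'a) \<Rightarrow> real" where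
  "cmedian_cost n k x S c = (1 / real n) * (\<Sum>j\<in>{1..k}. \<Sum>i\<in>S j. norm (x i - c j))"

definition cmedian_opt :: "nat \<Rightarrow> nat \<Rightarrow> (nat \<Rightarrow> nat set) set \<Rightarrow> (nat \<Rightarrow> 'a::euclidean_space) \<Rightarrow> real" where
  "cmedian_opt n k F x = Inf {cmedian_cost n k x S c | S c. S \<in> F}"

end

theory Submission
  imports Defs
begin

theorem lemma12:
  fixes p pt c :: "nat \<Rightarrow> 'a::euclidean_space"
    and n k :: nat and F :: "(nat \<Rightarrow> nat set) set" and \<omega> :: real
  assumes "n \<ge> 1" and "k \<ge> 1"
    and "is_constraint n k F"
    and "\<omega> = (1 / real n) * (\<Sum>i\<in>{1..n}. Min ((\<lambda>y. norm (p i - y)) ` (c ` {1..k})))"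
    and "\<And>i. i \<in> {1..n} \<Longrightarrow> pt i \<in> c ` {1..k}"
    and "\<And>i y. i \<in> {1..n} \<Longrightarrow> y \<in> c ` {1..k} \<Longrightarrow> norm (p i - pt i) \<le> norm (p i - y)"
  shows "cmedian_opt n k F pt \<le> \<omega> + cmedian_opt n k F p"
proof -
  have minq: "Min ((\<lambda>y. norm (p i - y)) ` (c ` {1..k})) = norm (p i - pt i)" if i: "i \<in> {1..n}" for i
  proof (rule Min_eqI)
    show "finite ((\<lambda>y. norm (p i - y)) ` (c ` {1..k}))" by simp
    show "\<And>y. y \<in> (\<lambda>y. norm (p i - y)) ` c ` {1..k} \<Longrightarrow> norm (p i - pt i) \<le> y"
      using assms(6)[OF i] by blast
    show "norm (p i - pt i) \<in> (\<lambda>y. norm (p i - y)) ` c ` {1..k}"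
      using assms(5)[OF i] by blast
  qed
  have om: "\<omega> = (1 / real n) * (\<Sum>i\<in>{1..n}. norm (p i - pt i))"
    using assms(4) minq by simp
  have key: "cmedian_cost n k pt S d \<le> \<omega> + cmedian_cost n k p S d" if S: "S \<in> F" for S d
  proof -
    have op: "ordered_partition n k S" using assms(3) S unfolding is_constraint_def by blast
    have un: "(\<Union>j\<in>{1..k}. S j) = {1..n}" and dis: "\<forall>j\<in>{1..k}. \<forall>j'\<in>{1..k}. j \<noteq> j' \<longrightarrow> S j \<inter> S j' = {}"
      using op unfolding ordered_partition_def by auto
    have fin: "\<forall>j\<in>{1..k}. finite (S j)"
    proof
      fix j assume "j \<in> {1..k}"
      hence "S j \<subseteq> {1..n}" using un by blast
      thus "finite (S j)" using finite_subset by blast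
    qed
    have sU: "(\<Sum>j\<in>{1..k}. \<Sum>i\<in>S j. norm (p i - pt i)) = (\<Sum>i\<in>{1..n}. norm (p i - pt i))"
    proof -
      have "(\<Sum>i\<in>(\<Union>j\<in>{1..k}. S j). norm (p i - pt i)) = (\<Sum>j\<in>{1..k}. \<Sum>i\<in>S j. norm (p i - pt i))"
        by (rule sum.UNION_disjoint) (use fin dis in auto)
      then show ?thesis by (simp only: un)
    qed
    have "(\<Sum>j\<in>{1..k}. \<Sum>i\<in>S j. norm (pt i - d j)) \<le>
          (\<Sum>j\<in>{1..k}. \<Sum>i\<in>S j. norm (p i - pt i) + norm (p i - d j))"
    proof (intro sum_mono)
      fix j i
      show "norm (pt i - d j) \<le> norm (p i - pt i) + norm (p i - d j)"
        using norm_triangle_ineq[of "pt i - p i" "p i - d j"] norm_minus_commute[of "pt i" "p i"] by simp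
    qed
    also have "\<dots> = (\<Sum>i\<in>{1..n}. norm (p i - pt i)) + (\<Sum>j\<in>{1..k}. \<Sum>i\<in>S j. norm (p i - d j))"
      by (simp only: sum.distrib sU)
    finally have fz: "(\<Sum>j\<in>{1..k}. \<Sum>i\<in>S j. norm (pt i - d j)) \<le>
       (\<Sum>i\<in>{1..n}. norm (p i - pt i)) + (\<Sum>j\<in>{1..k}. \<Sum>i\<in>S j. norm (p i - d j))" .
    have "1 / real n \<ge> 0" by simp
    then show ?thesis unfolding cmedian_cost_def om
      using mult_left_mono[OF fz, of "1 / real n"] by (simp add: distrib_left)
  qed
  let ?A = "{cmedian_cost n k pt S d | S d. S \<in> F}"
  let ?B = "{cmedian_cost n k p S d | S d. S \<in> F}"
  have ne: "?B \<noteq> {}" using assms(3) unfolding is_constraint_def by blast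
  have nonneg: "cmedian_cost n k pt S d \<ge> 0" for S d
    unfolding cmedian_cost_def by (intro mult_nonneg_nonneg sum_nonneg) auto
  have bdd: "bdd_below ?A" unfolding bdd_below_def using nonneg by blast
  have "Inf ?A - \<omega> \<le> Inf ?B"
  proof (rule cInf_greatest[OF ne])
    fix b assume "b \<in> ?B"
    then obtain S d where S: "S \<in> F" and b: "b = cmedian_cost n k p S d" by blast
    have "Inf ?A \<le> cmedian_cost n k pt S d" by (rule cInf_lower) (use S bdd in blast)+
    thus "Inf ?A - \<omega> \<le> b" using key[OF S, of d] b by simp
  qed
  thus ?thesis unfolding cmedian_opt_def by simp
qed

end
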